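(* Let $k,l\ge 1$ and let $V'(k,l)=\{x_1,\dots,x_k\}\times\{y_1,\dots,y_l\}$ with $x_1<\dots<x_k$ and $y_1<\dots<y_l$ real numbers. Let $S$ be a finite set of closed line segments in the plane, none of which is horizontal or vertical, whose union contains $V'(k,l)$. Then $|S|\ge k+l-2$. Moreover, if $k=1$ or $l=1$, or if $S$ is noncrossing, then $|S|\ge k+l-1$.
   Context: Segments are nondegenerate (positive length); a segment is horizontal (vertical) if its endpoints have equal $y$- (resp. $x$-) coordinates. A set of segments is noncrossing if any two of its segments intersect at most in a point that is a common endpoint of both. *)

theory Defs
  imports "HOL-Analysis.Analysis"
begin

type_synonym point = "real \<times> real"

definition is_segment :: "point set \<Rightarrow> bool" where
  "is_segment s \<longleftrightarrow> (\<exists>p q. p \<noteq> q \<and> s = closed_segment p q)"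

definition horizontal :: "point set \<Rightarrow> bool" where
  "horizontal s \<longleftrightarrow> (\<exists>p q. p \<noteq> q \<and> s = closed_segment p q \<and> snd p = snd q)"

definition vertical :: "point set \<Rightarrow> bool" where
  "vertical s \<longleftrightarrow> (\<exists>p q. p \<noteq> q \<and> s = closed_segment p q \<and> fst p = fst q)"

definition noncrossing :: "point set set \<Rightarrow> bool" where
  "noncrossing S \<longleftrightarrow>
     (\<forall>s\<in>S. \<forall>t\<in>S. s \<noteq> t \<longrightarrow>
        (\<exists>p q p' q'. s = closed_segment p q \<and> t = closed_segment p' q' \<and>
           (\<exists>z. s \<inter> t \<subseteq> {z}) \<and> s \<inter> t \<subseteq> {p, q} \<inter> {p', q'}))"

end

theory Submission imports Defs begin

lemma good_seg:
  assumes "is_segment s" "\<not> horizontal s" "\<not> vertical s"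
  shows "\<exists>p q. s = closed_segment p q \<and> fst p \<noteq> fst q \<and> snd p \<noteq> snd q"
  using assms unfolding is_segment_def horizontal_def vertical_def by blast

lemma seg_coord:
  assumes "z \<in> closed_segment p (q::point)"
  shows "\<exists>u. 0 \<le> u \<and> u \<le> 1 \<and> fst z = fst p + u * (fst q - fst p) \<and> snd z = snd p + u * (snd q - snd p)"
proof -
  obtain u where u: "0 \<le> u" "u \<le> 1" "z = (1 - u) *\<^sub>R p + u *\<^sub>R q" using assms unfolding in_segment(1) by blast
  have "fst z = (1 - u) * fst p + u * fst q" "snd z = (1 - u) * snd p + u * snd q" using u(3) by simp_all
  then show ?thesis using u(1,2) by (intro exI[of _ u]) (simp add: algebra_simps)
qed

lemma seg_pair:
  assumes "fst p \<noteq> fst q" "snd p \<noteq> snd q" "u \<in> closed_segment p (q::point)" "v \<in> closed_segment p q" "u \<noteq> v"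
  shows "fst u \<noteq> fst v \<and> snd u \<noteq> snd v \<and>
         (fst u - fst v) * (snd u - snd v) * ((fst q - fst p) * (snd q - snd p)) > 0"
proof -
  obtain a where a: "fst u = fst p + a * (fst q - fst p)" "snd u = snd p + a * (snd q - snd p)"
    using seg_coord[OF assms(3)] by blast
  obtain b where b: "fst v = fst p + b * (fst q - fst p)" "snd v = snd p + b * (snd q - snd p)"
    using seg_coord[OF assms(4)] by blast
  have "a \<noteq> b"
  proof
    assume "a = b" then have "u = v" using a b by (simp add: prod_eq_iff)
    with assms show False by simp
  qed
  have e1: "fst u - fst v = (a - b) * (fst q - fst p)" using a b by (simp add: algebra_simps)
  have e2: "snd u - snd v = (a - b) * (snd q - snd p)" using a b by (simp add: algebra_simps)
  have "(fst u - fst v) * (snd u - snd v) * ((fst q - fst p) * (snd q - snd p))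
      = ((a - b) * (fst q - fst p) * (snd q - snd p))^2" unfolding e1 e2 by (simp add: power2_eq_square algebra_simps)
  moreover have "(a - b) * (fst q - fst p) * (snd q - snd p) \<noteq> 0" using \<open>a \<noteq> b\<close> assms by simp
  ultimately have pos: "(fst u - fst v) * (snd u - snd v) * ((fst q - fst p) * (snd q - snd p)) > 0"
    by simp
  have n1: "(a - b) * (fst q - fst p) \<noteq> 0" using \<open>a \<noteq> b\<close> assms by simp
  have n2: "(a - b) * (snd q - snd p) \<noteq> 0" using \<open>a \<noteq> b\<close> assms by simp
  have "fst u \<noteq> fst v" using e1 n1 by (metis eq_iff_diff_eq_0)
  moreover have "snd u \<noteq> snd v" using e2 n2 by (metis eq_iff_diff_eq_0)
  ultimately show ?thesis using pos by blast
qed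

lemma extreme_aux:
  fixes p q c d z :: "'a::real_vector"
  assumes "c \<in> closed_segment p q" "d \<in> closed_segment p q" "p \<in> closed_segment c d"
  shows "p = c \<or> p = d"
proof (cases "p = q")
  case True
  then have "c = p" using assms(1) by simp
  then show ?thesis by simp
next
  case False
  obtain a where a: "0 \<le> a" "a \<le> 1" "c = (1 - a) *\<^sub>R p + a *\<^sub>R q" using assms(1) unfolding in_segment(1) by blast
  obtain b where b: "0 \<le> b" "b \<le> 1" "d = (1 - b) *\<^sub>R p + b *\<^sub>R q" using assms(2) unfolding in_segment(1) by blast
  obtain t where t: "0 \<le> t" "t \<le> 1" "p = (1 - t) *\<^sub>R c + t *\<^sub>R d" using assms(3) unfolding in_segment(1) by blast
  have "(1 - t) *\<^sub>R c + t *\<^sub>R d = p + ((1 - t) * a + t * b) *\<^sub>R (q - p)"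
    unfolding a(3) b(3) by (simp add: algebra_simps)
  then have "((1 - t) * a + t * b) *\<^sub>R (q - p) = 0" using t(3) by simp
  moreover have "q - p \<noteq> 0" using False by simp
  ultimately have h: "(1 - t) * a + t * b = 0" using scaleR_eq_0_iff by blast
  have "(1 - t) * a \<ge> 0" "t * b \<ge> 0" using a(1) b(1) t(1,2) by simp_all
  then have h1: "(1 - t) * a = 0" "t * b = 0" using h by linarith+
  show ?thesis
  proof (cases "t = 1")
    case True then have "b = 0" using h1 by simp
    then have "d = p" using b(3) by simp
    then show ?thesis by simp
  next
    case False then have "a = 0" using h1 by simp
    then have "c = p" using a(3) by simp
    then show ?thesis by simp
  qed
qed

lemma extreme:
  fixes p q c d z :: "'a::real_vector"
  assumes "c \<in> closed_segment p q" "d \<in> closed_segment p q" "z \<in> closed_segment c d" "z = p \<or> z = q"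
  shows "z = c \<or> z = d"
  using assms(4)
proof
  assume "z = p"
  then show ?thesis using extreme_aux[of c p q d] assms(1-3) by simp
next
  assume "z = q"
  then show ?thesis using extreme_aux[of c q p d] assms(1-3) by (simp add: closed_segment_commute)
qed

lemma seg_fst_bounds:
  assumes "z \<in> closed_segment A (C::point)" "fst C \<le> fst A"
  shows "fst C \<le> fst z \<and> fst z \<le> fst A"
proof -
  obtain u where u: "0 \<le> u" "u \<le> 1" "fst z = fst A + u * (fst C - fst A)" using seg_coord[OF assms(1)] by blast
  have "u * (fst A - fst C) \<le> 1 * (fst A - fst C)" using u assms(2) by (intro mult_right_mono) auto
  moreover have "u * (fst A - fst C) \<ge> 0" using u assms(2) by simp
  ultimately show ?thesis using u by (auto simp: algebra_simps)
qed

lemma case1: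
  fixes c P A Q :: point
  assumes "c = (x1, y1)" "fst P = x2" "y1 < snd P" "snd P \<le> y2" "x1 < x2" "A = (x2, y1)"
    "x1 \<le> fst Q" "fst Q < x2" "y1 < snd Q" "snd Q \<le> y2" "fst Q = x1 \<or> snd Q = y2"
  shows "\<exists>z. z \<in> closed_segment c P \<and> z \<in> closed_segment A Q"
proof -
  define b where "b = snd P"
  define nv :: point where "nv = (y1 - b, x2 - x1)"
  define \<beta> where "\<beta> = inner nv c"
  have fA: "inner nv A - \<beta> = (y1 - b) * (x2 - x1)"
    using assms unfolding nv_def \<beta>_def by (simp add: algebra_simps)
  have "(y1 - b) * (x2 - x1) < 0" using assms b_def by (intro mult_neg_pos) auto
  then have fA': "inner nv A \<le> \<beta>" using fA by linarith
  have iv: "inner nv w = (y1 - b) * fst w + (x2 - x1) * snd w" for w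
    unfolding nv_def by (cases w) simp
  have fQ: "inner nv Q - \<beta> = (y1 - b) * (fst Q - x1) + (x2 - x1) * (snd Q - y1)"
    using assms unfolding iv \<beta>_def by (simp add: algebra_simps)
  have "inner nv Q - \<beta> > 0"
  proof (cases "fst Q = x1")
    case True then show ?thesis using fQ assms by simp
  next
    case False
    then have sq: "snd Q = y2" using assms by simp
    have "(b - y1) * (fst Q - x1) \<le> (y2 - y1) * (fst Q - x1)"
      using assms b_def by (intro mult_right_mono) auto
    moreover have "(x2 - x1) * (y2 - y1) - (y2 - y1) * (fst Q - x1) = (y2 - y1) * (x2 - fst Q)"
      by (simp add: algebra_simps)
    moreover have "(y2 - y1) * (x2 - fst Q) > 0" using assms by simp
    ultimately show ?thesis using fQ sq by (simp add: algebra_simps)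
  qed
  then have fQ': "\<beta> \<le> inner nv Q" by simp
  obtain z where z: "z \<in> closed_segment A Q" "inner nv z = \<beta>"
    using connected_ivt_hyperplane[OF connected_segment ends_in_segment(1) ends_in_segment(2) fA' fQ'] by blast
  have zb: "fst Q \<le> fst z" "fst z \<le> x2" using seg_fst_bounds[OF z(1)] assms by auto
  have zl: "(y1 - b) * (fst z - x1) + (x2 - x1) * (snd z - y1) = 0"
    using z(2) assms unfolding iv \<beta>_def by (simp add: algebra_simps)
  define u where "u = (fst z - x1) / (x2 - x1)"
  have u: "0 \<le> u" "u \<le> 1" using zb assms unfolding u_def by (auto simp: field_simps)
  have "fst z = x1 + u * (x2 - x1)" using assms unfolding u_def by (simp add: field_simps)
  moreover have "snd z = y1 + u * (b - y1)"
  proof -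
    have "(x2 - x1) * (snd z - y1) = (b - y1) * (fst z - x1)" using zl by (simp add: algebra_simps)
    then have "snd z - y1 = (b - y1) * (fst z - x1) / (x2 - x1)" using assms by (simp add: field_simps)
    then show ?thesis unfolding u_def by (simp add: field_simps)
  qed
  ultimately have "z = (1 - u) *\<^sub>R c + u *\<^sub>R P" using assms b_def
    by (simp add: prod_eq_iff algebra_simps)
  then have "z \<in> closed_segment c P" using u unfolding in_segment(1) by blast
  then show ?thesis using z by blast
qed

lemma swap_seg:
  "z \<in> closed_segment p (q::point) \<longleftrightarrow> prod.swap z \<in> closed_segment (prod.swap p) (prod.swap q)"
  unfolding in_segment(1) by (auto simp: prod_eq_iff)

lemma case2:
  fixes c P T R :: point
  assumes "c = (x1, y1)" "snd P = y2" "x1 < fst P" "fst P \<le> x2" "y1 < y2" "T = (x1, y2)"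
    "y1 \<le> snd R" "snd R < y2" "x1 < fst R" "fst R \<le> x2" "snd R = y1 \<or> fst R = x2"
  shows "\<exists>z. z \<in> closed_segment c P \<and> z \<in> closed_segment T R"
proof -
  obtain z where "z \<in> closed_segment (prod.swap c) (prod.swap P) \<and> z \<in> closed_segment (prod.swap T) (prod.swap R)"
    using case1[of "prod.swap c" y1 x1 "prod.swap P" y2 x2 "prod.swap T" "prod.swap R"] assms by auto
  then have "prod.swap z \<in> closed_segment c P" "prod.swap z \<in> closed_segment T R"
    using swap_seg[of "prod.swap z" c P] swap_seg[of "prod.swap z" T R] by auto
  then show ?thesis by blast
qed


lemma neg_aux1: "(a::real) \<le> 0 \<Longrightarrow> b \<ge> 0 \<Longrightarrow> \<sigma> > 0 \<Longrightarrow> a * b * \<sigma> \<le> 0"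
  by (metis mult_nonpos_nonneg less_imp_le)
lemma neg_aux2: "(a::real) \<ge> 0 \<Longrightarrow> b \<le> 0 \<Longrightarrow> \<sigma> > 0 \<Longrightarrow> a * b * \<sigma> \<le> 0"
  by (metis mult_nonneg_nonpos mult_nonpos_nonneg less_imp_le)
lemma neg_aux3: "(a::real) \<le> 0 \<Longrightarrow> b \<le> 0 \<Longrightarrow> \<sigma> < 0 \<Longrightarrow> a * b * \<sigma> \<le> 0"
  by (simp add: mult_nonneg_nonpos zero_le_mult_iff)
lemma neg_aux4: "(a::real) \<ge> 0 \<Longrightarrow> b \<ge> 0 \<Longrightarrow> \<sigma> < 0 \<Longrightarrow> a * b * \<sigma> \<le> 0"
  by (simp add: mult_nonneg_nonpos)

lemma contra1: "(x::real) \<le> x' \<Longrightarrow> y' \<le> y \<Longrightarrow> \<sigma> > 0 \<Longrightarrow> (x - x') * (y - y') * \<sigma> > 0 \<Longrightarrow> False"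
  using neg_aux1[of "x - x'" "y - y'" \<sigma>] by linarith
lemma contra2: "(x::real) \<ge> x' \<Longrightarrow> y' \<ge> y \<Longrightarrow> \<sigma> > 0 \<Longrightarrow> (x - x') * (y - y') * \<sigma> > 0 \<Longrightarrow> False"
  using neg_aux2[of "x - x'" "y - y'" \<sigma>] by linarith
lemma contra3: "(x::real) \<le> x' \<Longrightarrow> y \<le> y' \<Longrightarrow> \<sigma> < 0 \<Longrightarrow> (x - x') * (y - y') * \<sigma> > 0 \<Longrightarrow> False"
  using neg_aux3[of "x - x'" "y - y'" \<sigma>] by linarith
lemma contra4: "(x::real) \<ge> x' \<Longrightarrow> y \<ge> y' \<Longrightarrow> \<sigma> < 0 \<Longrightarrow> (x - x') * (y - y') * \<sigma> > 0 \<Longrightarrow> False"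
  using neg_aux4[of "x - x'" "y - y'" \<sigma>] by linarith

lemma card_B_le2:
  fixes s :: "point set"
  assumes s: "s = closed_segment p q" "fst p \<noteq> fst q" "snd p \<noteq> snd q"
    and X: "\<forall>x\<in>X. x1 \<le> x \<and> x \<le> x2" and Y: "\<forall>y\<in>Y. y1 \<le> y \<and> y \<le> y2"
    and fin: "finite X" "finite Y"
    and B: "B = {z \<in> X \<times> Y. fst z = x1 \<or> fst z = x2 \<or> snd z = y1 \<or> snd z = y2}"
  shows "card (s \<inter> B) \<le> 2"
proof -
  define \<sigma> where "\<sigma> = (fst q - fst p) * (snd q - snd p)"
  have P: "fst u \<noteq> fst v \<and> snd u \<noteq> snd v \<and> (fst u - fst v) * (snd u - snd v) * \<sigma> > 0"
    if "u \<in> s" "v \<in> s" "u \<noteq> v" for u v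
    using seg_pair[OF s(2,3)] that s(1) unfolding \<sigma>_def by blast
  have \<sigma>0: "\<sigma> \<noteq> 0" using s unfolding \<sigma>_def by simp
  have bnd: "x1 \<le> fst u \<and> fst u \<le> x2 \<and> y1 \<le> snd u \<and> snd u \<le> y2" if "u \<in> B" for u
    using that X Y B by auto
  have finB: "finite (s \<inter> B)" using fin B by (auto intro: finite_subset[of _ "X \<times> Y"])
  have two: "card (s \<inter> B) \<le> 2" if
     cov: "s \<inter> B \<subseteq> {z. Q1 z} \<union> {z. Q2 z}"
     and e1: "\<And>u v. u \<in> s \<inter> B \<Longrightarrow> v \<in> s \<inter> B \<Longrightarrow> Q1 u \<Longrightarrow> Q1 v \<Longrightarrow> u = v"
     and e2: "\<And>u v. u \<in> s \<inter> B \<Longrightarrow> v \<in> s \<inter> B \<Longrightarrow> Q2 u \<Longrightarrow> Q2 v \<Longrightarrow> u = v" for Q1 Q2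
  proof -
    have eq: "s \<inter> B = {z \<in> s \<inter> B. Q1 z} \<union> {z \<in> s \<inter> B. Q2 z}" using cov by auto
    have f1: "finite {z \<in> s \<inter> B. Q1 z}" by (rule finite_subset[OF _ finB]) auto
    have c1: "card {z \<in> s \<inter> B. Q1 z} \<le> Suc 0"
      using e1 f1 by (subst card_le_Suc0_iff_eq) auto
    have f2: "finite {z \<in> s \<inter> B. Q2 z}" by (rule finite_subset[OF _ finB]) auto
    have c2: "card {z \<in> s \<inter> B. Q2 z} \<le> Suc 0"
      using e2 f2 by (subst card_le_Suc0_iff_eq) auto
    have "card (s \<inter> B) \<le> card {z \<in> s \<inter> B. Q1 z} + card {z \<in> s \<inter> B. Q2 z}"
      using card_Un_le[of "{z \<in> s \<inter> B. Q1 z}" "{z \<in> s \<inter> B. Q2 z}"] eq by argo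
    then show ?thesis using c1 c2 by linarith
  qed
  show ?thesis
  proof (cases "\<sigma> > 0")
    case True
    show ?thesis
    proof (rule two[of "\<lambda>z. fst z = x1 \<or> snd z = y1" "\<lambda>z. fst z = x2 \<or> snd z = y2"])
      show "s \<inter> B \<subseteq> {z. fst z = x1 \<or> snd z = y1} \<union> {z. fst z = x2 \<or> snd z = y2}" using B by auto
    next
      fix u v assume h: "u \<in> s \<inter> B" "v \<in> s \<inter> B" "fst u = x1 \<or> snd u = y1" "fst v = x1 \<or> snd v = y1"
      show "u = v"
      proof (rule ccontr)
        assume "u \<noteq> v"
        have uv: "u \<in> s" "v \<in> s" using h by auto
        have p: "fst u \<noteq> fst v" "snd u \<noteq> snd v" "(fst u - fst v) * (snd u - snd v) * \<sigma> > 0"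
          using P[OF uv \<open>u \<noteq> v\<close>] by auto
        have b: "x1 \<le> fst u" "x1 \<le> fst v" "y1 \<le> snd u" "y1 \<le> snd v" using bnd h by auto
        show False
        proof (cases "fst u = x1")
          case True
          then have "snd v = y1" using h p by auto
          note nn = this
          show False by (rule contra1[OF _ _ _ p(3)]) (use nn True b p \<open>\<sigma> > 0\<close> in linarith)+
        next
          case False
          then have "snd u = y1" "fst v = x1" using h p by auto
          note nn = this
          show False by (rule contra2[OF _ _ _ p(3)]) (use nn b p \<open>\<sigma> > 0\<close> in linarith)+
        qed
      qed
    next
      fix u v assume h: "u \<in> s \<inter> B" "v \<in> s \<inter> B" "fst u = x2 \<or> snd u = y2" "fst v = x2 \<or> snd v = y2"
      show "u = v"
      proof (rule ccontr)
        assume "u \<noteq> v"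
        have uv: "u \<in> s" "v \<in> s" using h by auto
        have p: "fst u \<noteq> fst v" "snd u \<noteq> snd v" "(fst u - fst v) * (snd u - snd v) * \<sigma> > 0"
          using P[OF uv \<open>u \<noteq> v\<close>] by auto
        have b: "fst u \<le> x2" "fst v \<le> x2" "snd u \<le> y2" "snd v \<le> y2" using bnd h by auto
        show False
        proof (cases "fst u = x2")
          case True
          then have "snd v = y2" using h p by auto
          note nn = this
          show False by (rule contra2[OF _ _ _ p(3)]) (use nn True b p \<open>\<sigma> > 0\<close> in linarith)+
        next
          case False
          then have "snd u = y2" "fst v = x2" using h p by auto
          note nn = this
          show False by (rule contra1[OF _ _ _ p(3)]) (use nn b p \<open>\<sigma> > 0\<close> in linarith)+
        qed
      qed
    qed
  next
    case False
    then have neg: "\<sigma> < 0" using \<sigma>0 by simp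
    show ?thesis
    proof (rule two[of "\<lambda>z. fst z = x1 \<or> snd z = y2" "\<lambda>z. fst z = x2 \<or> snd z = y1"])
      show "s \<inter> B \<subseteq> {z. fst z = x1 \<or> snd z = y2} \<union> {z. fst z = x2 \<or> snd z = y1}" using B by auto
    next
      fix u v assume h: "u \<in> s \<inter> B" "v \<in> s \<inter> B" "fst u = x1 \<or> snd u = y2" "fst v = x1 \<or> snd v = y2"
      show "u = v"
      proof (rule ccontr)
        assume "u \<noteq> v"
        have uv: "u \<in> s" "v \<in> s" using h by auto
        have p: "fst u \<noteq> fst v" "snd u \<noteq> snd v" "(fst u - fst v) * (snd u - snd v) * \<sigma> > 0"
          using P[OF uv \<open>u \<noteq> v\<close>] by auto
        have b: "x1 \<le> fst u" "x1 \<le> fst v" "snd u \<le> y2" "snd v \<le> y2" using bnd h by auto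
        show False
        proof (cases "fst u = x1")
          case True
          then have "snd v = y2" using h p by auto
          note nn = this
          show False by (rule contra3[OF _ _ _ p(3)]) (use nn True b p neg in linarith)+
        next
          case False
          then have "snd u = y2" "fst v = x1" using h p by auto
          note nn = this
          show False by (rule contra4[OF _ _ _ p(3)]) (use nn b p neg in linarith)+
        qed
      qed
    next
      fix u v assume h: "u \<in> s \<inter> B" "v \<in> s \<inter> B" "fst u = x2 \<or> snd u = y1" "fst v = x2 \<or> snd v = y1"
      show "u = v"
      proof (rule ccontr)
        assume "u \<noteq> v"
        have uv: "u \<in> s" "v \<in> s" using h by auto
        have p: "fst u \<noteq> fst v" "snd u \<noteq> snd v" "(fst u - fst v) * (snd u - snd v) * \<sigma> > 0"
          using P[OF uv \<open>u \<noteq> v\<close>] by auto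
        have b: "fst u \<le> x2" "fst v \<le> x2" "y1 \<le> snd u" "y1 \<le> snd v" using bnd h by auto
        show False
        proof (cases "fst u = x2")
          case True
          then have "snd v = y1" using h p by auto
          note nn = this
          show False by (rule contra4[OF _ _ _ p(3)]) (use nn True b p neg in linarith)+
        next
          case False
          then have "snd u = y1" "fst v = x2" using h p by auto
          note nn = this
          show False by (rule contra3[OF _ _ _ p(3)]) (use nn b p neg in linarith)+
        qed
      qed
    qed
  qed
qed

lemma cover_count:
  assumes "finite S" "A \<subseteq> \<Union>S"
  shows "card A \<le> (\<Sum>s\<in>S. card (s \<inter> A))"
proof -
  have "A = (\<Union>s\<in>S. s \<inter> A)" using assms by auto
  then show ?thesis using card_UN_le[OF assms(1), of "\<lambda>s. s \<inter> A"] by simp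
qed


lemma cross_contra:
  assumes nc: "noncrossing S" and st: "s \<in> S" "t \<in> S" "s \<noteq> t"
    and in_s: "c \<in> s" "P \<in> s" and in_t: "A \<in> t" "Q \<in> t"
    and z: "z \<in> closed_segment c P" "z \<in> closed_segment A Q"
  shows "(z = c \<or> z = P) \<and> (z = A \<or> z = Q)"
proof -
  obtain p q p' q' where pq: "s = closed_segment p q" "t = closed_segment p' q'"
    "s \<inter> t \<subseteq> {p, q} \<inter> {p', q'}"
  proof -
    have "\<exists>p q p' q'. s = closed_segment p q \<and> t = closed_segment p' q' \<and>
           (\<exists>z. s \<inter> t \<subseteq> {z}) \<and> s \<inter> t \<subseteq> {p, q} \<inter> {p', q'}"
      using nc[unfolded noncrossing_def, rule_format, OF st] .
    then obtain p q p' q' where "s = closed_segment p q" "t = closed_segment p' q'"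
      "s \<inter> t \<subseteq> {p, q} \<inter> {p', q'}" by (elim exE conjE) simp
    then show ?thesis using that by blast
  qed
  have cs: "c \<in> closed_segment p q" "P \<in> closed_segment p q" using in_s pq(1) by simp_all
  have ct: "A \<in> closed_segment p' q'" "Q \<in> closed_segment p' q'" using in_t pq(2) by simp_all
  have "closed_segment c P \<subseteq> s" unfolding pq(1) subset_closed_segment using cs by simp
  then have zs: "z \<in> s" using z(1) by (rule subsetD)
  have "closed_segment A Q \<subseteq> t" unfolding pq(2) subset_closed_segment using ct by simp
  then have zt: "z \<in> t" using z(2) by (rule subsetD)
  have zz: "z \<in> {p, q}" "z \<in> {p', q'}" using pq(3) zs zt by blast+
  have "z = c \<or> z = P" by (rule extreme[OF cs z(1)]) (use zz(1) in simp)
  moreover have "z = A \<or> z = Q" by (rule extreme[OF ct z(2)]) (use zz(2) in simp)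
  ultimately show ?thesis by blast
qed

theorem lemma7:
  fixes X Y :: "real set" and k l :: nat and S :: "point set set"
  assumes "finite X" "finite Y" "card X = k" "card Y = l" "k \<ge> 1" "l \<ge> 1"
    and "finite S"
    and "\<forall>s\<in>S. is_segment s \<and> \<not> horizontal s \<and> \<not> vertical s"
    and "X \<times> Y \<subseteq> \<Union>S"
  shows "card S \<ge> k + l - 2 \<and>
         ((k = 1 \<or> l = 1 \<or> noncrossing S) \<longrightarrow> card S \<ge> k + l - 1)"
proof -
  note finX = assms(1) and finY = assms(2) and finS = assms(7) and cov = assms(9)
  have segS: "\<exists>p q. s = closed_segment p q \<and> fst p \<noteq> fst q \<and> snd p \<noteq> snd q" if "s \<in> S" for s
    using assms(8) good_seg that by blast
  have distS: "fst u \<noteq> fst v \<and> snd u \<noteq> snd v" if hs: "s \<in> S" "u \<in> s" "v \<in> s" "u \<noteq> v" for s u v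
  proof -
    obtain p q where pq: "s = closed_segment p q" "fst p \<noteq> fst q" "snd p \<noteq> snd q" using segS[OF hs(1)] by blast
    show ?thesis using seg_pair[OF pq(2,3), of u v] hs pq(1) by blast
  qed
  have finXY: "finite (X \<times> Y)" using finX finY by simp
  have sum_le1: "(\<Sum>s\<in>S. card (s \<inter> A)) \<le> card S" if "\<And>s. s \<in> S \<Longrightarrow> card (s \<inter> A) \<le> 1" for A
    using sum_mono[of S "\<lambda>s. card (s \<inter> A)" "\<lambda>_. 1"] that by simp
  have Xne: "X \<noteq> {}" and Yne: "Y \<noteq> {}" using assms(3-6) by auto
  have onek: "card S \<ge> l" if k1: "k = 1"
  proof -
    obtain x where X: "X = {x}" using k1 assms(3) card_1_singletonE by blast
    have "card (s \<inter> (X \<times> Y)) \<le> 1" if "s \<in> S" for s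
    proof -
      have "finite (s \<inter> (X \<times> Y))" using finXY by simp
      moreover have "\<forall>u\<in>s \<inter> (X \<times> Y). \<forall>v\<in>s \<inter> (X \<times> Y). u = v"
      proof (intro ballI)
        fix u v assume uv: "u \<in> s \<inter> (X \<times> Y)" "v \<in> s \<inter> (X \<times> Y)"
        then have e: "fst u = x" "fst v = x" and uvs: "u \<in> s" "v \<in> s" using X by auto
        show "u = v" using distS[OF that uvs] e by auto
      qed
      ultimately show ?thesis using card_le_Suc0_iff_eq[of "s \<inter> (X \<times> Y)"] by simp
    qed
    then have "(\<Sum>s\<in>S. card (s \<inter> (X \<times> Y))) \<le> card S" using sum_le1 by blast
    moreover have "card (X \<times> Y) \<le> (\<Sum>s\<in>S. card (s \<inter> (X \<times> Y)))" using cover_count[OF finS cov] .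
    moreover have "card (X \<times> Y) = l" using X assms(4) by (simp add: card_cartesian_product)
    ultimately show ?thesis by linarith
  qed
  have onel: "card S \<ge> k" if l1: "l = 1"
  proof -
    obtain y where Y: "Y = {y}" using l1 assms(4) card_1_singletonE by blast
    have "card (s \<inter> (X \<times> Y)) \<le> 1" if "s \<in> S" for s
    proof -
      have "finite (s \<inter> (X \<times> Y))" using finXY by simp
      moreover have "\<forall>u\<in>s \<inter> (X \<times> Y). \<forall>v\<in>s \<inter> (X \<times> Y). u = v"
      proof (intro ballI)
        fix u v assume uv: "u \<in> s \<inter> (X \<times> Y)" "v \<in> s \<inter> (X \<times> Y)"
        then have e: "snd u = y" "snd v = y" and uvs: "u \<in> s" "v \<in> s" using Y by auto
        show "u = v" using distS[OF that uvs] e by auto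
      qed
      ultimately show ?thesis using card_le_Suc0_iff_eq[of "s \<inter> (X \<times> Y)"] by simp
    qed
    then have "(\<Sum>s\<in>S. card (s \<inter> (X \<times> Y))) \<le> card S" using sum_le1 by blast
    moreover have "card (X \<times> Y) \<le> (\<Sum>s\<in>S. card (s \<inter> (X \<times> Y)))" using cover_count[OF finS cov] .
    moreover have "card (X \<times> Y) = k" using Y assms(3) by (simp add: card_cartesian_product)
    ultimately show ?thesis by linarith
  qed
  have main: "2*k + 2*l - 4 \<le> 2 * card S \<and> (noncrossing S \<longrightarrow> 2*k + 2*l - 4 \<le> 2 * card S - 1)"
    if k2: "k \<ge> 2" and l2: "l \<ge> 2"
  proof -
    define x1 where "x1 = Min X"
    define x2 where "x2 = Max X"
    define y1 where "y1 = Min Y"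
    define y2 where "y2 = Max Y"
    have inX: "x1 \<in> X" "x2 \<in> X" using Xne finX unfolding x1_def x2_def by auto
    have inY: "y1 \<in> Y" "y2 \<in> Y" using Yne finY unfolding y1_def y2_def by auto
    have bX: "\<forall>x\<in>X. x1 \<le> x \<and> x \<le> x2" using finX unfolding x1_def x2_def by auto
    have bY: "\<forall>y\<in>Y. y1 \<le> y \<and> y \<le> y2" using finY unfolding y1_def y2_def by auto
    have x12: "x1 < x2"
    proof (rule ccontr)
      assume "\<not> x1 < x2"
      then have "X \<subseteq> {x1}" using bX by force
      then have "card X \<le> 1" using card_mono[of "{x1}" X] by simp
      then show False using assms(3) k2 by simp
    qed
    have y12: "y1 < y2"
    proof (rule ccontr)
      assume "\<not> y1 < y2"
      then have "Y \<subseteq> {y1}" using bY by force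
      then have "card Y \<le> 1" using card_mono[of "{y1}" Y] by simp
      then show False using assms(4) l2 by simp
    qed
    define B where "B = {z \<in> X \<times> Y. fst z = x1 \<or> fst z = x2 \<or> snd z = y1 \<or> snd z = y2}"
    have Beq: "B = ({x1, x2} \<times> Y) \<union> (X \<times> {y1, y2})" using inX inY unfolding B_def by auto
    have Int: "({x1, x2} \<times> Y) \<inter> (X \<times> {y1, y2}) = {x1, x2} \<times> {y1, y2}" using inX inY by auto
    have "card ({x1, x2} \<times> Y) + card (X \<times> {y1, y2}) = card B + card ({x1, x2} \<times> {y1, y2})"
      unfolding Beq Int[symmetric] by (rule card_Un_Int) (use finX finY in auto)
    moreover have "card ({x1, x2} \<times> Y) = 2 * l" using x12 assms(4) by (simp add: card_cartesian_product)
    moreover have "card (X \<times> {y1, y2}) = 2 * k" using y12 assms(3) by (simp add: card_cartesian_product)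
    moreover have "card ({x1, x2} \<times> {y1, y2}) = 4" using x12 y12 by (simp add: card_cartesian_product)
    ultimately have cardB: "card B = 2 * k + 2 * l - 4" by linarith
    have BXY: "B \<subseteq> X \<times> Y" unfolding B_def by auto
    have finB: "finite B" using BXY finXY finite_subset by blast
    have le2: "card (s \<inter> B) \<le> 2" if hs: "s \<in> S" for s
    proof -
      obtain p q where "s = closed_segment p q" "fst p \<noteq> fst q" "snd p \<noteq> snd q" using segS[OF hs] by blast
      then show ?thesis using card_B_le2[OF _ _ _ bX bY finX finY B_def] by blast
    qed
    have cB: "card B \<le> (\<Sum>s\<in>S. card (s \<inter> B))" using cover_count[OF finS] BXY cov by blast
    have sum2: "(\<Sum>s\<in>S. card (s \<inter> B)) \<le> 2 * card S"
      using sum_mono[of S "\<lambda>s. card (s \<inter> B)" "\<lambda>_. 2"] le2 by simp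
    have nc: "2*k + 2*l - 4 \<le> 2 * card S - 1" if ncS: "noncrossing S"
    proof -
      have "\<exists>s0\<in>S. card (s0 \<inter> B) \<le> 1"
      proof (rule ccontr)
        assume "\<not> (\<exists>s0\<in>S. card (s0 \<inter> B) \<le> 1)"
        then have ge2: "card (s \<inter> B) \<ge> 2" if "s \<in> S" for s
        proof -
          have "\<not> card (s \<inter> B) \<le> 1" using that \<open>\<not> (\<exists>s0\<in>S. card (s0 \<inter> B) \<le> 1)\<close> by blast
          then show ?thesis by linarith
        qed
        have other: "\<exists>s\<in>S. c \<in> s \<and> (\<exists>P\<in>s \<inter> B. P \<noteq> c)" if hc: "c \<in> B" for c
        proof -
          obtain s where s: "s \<in> S" "c \<in> s" using hc BXY cov by blast
          show ?thesis
          proof (rule ccontr)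
            assume "\<not> ?thesis"
            then have "s \<inter> B \<subseteq> {c}" using s by blast
            then have "card (s \<inter> B) \<le> 1" using card_mono[of "{c}" "s \<inter> B"] by simp
            then show False using ge2[OF s(1)] by simp
          qed
        qed
        have cBL: "(x1, y1) \<in> B" and cBR: "(x2, y1) \<in> B" and cTL: "(x1, y2) \<in> B"
          using inX inY unfolding B_def by auto
        obtain s1 P where s1: "s1 \<in> S" "(x1, y1) \<in> s1" "P \<in> s1" "P \<in> B" "P \<noteq> (x1, y1)"
          using other[OF cBL] by blast
        obtain s2 Q where s2: "s2 \<in> S" "(x2, y1) \<in> s2" "Q \<in> s2" "Q \<in> B" "Q \<noteq> (x2, y1)"
          using other[OF cBR] by blast
        obtain s3 R where s3: "s3 \<in> S" "(x1, y2) \<in> s3" "R \<in> s3" "R \<in> B" "R \<noteq> (x1, y2)"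
          using other[OF cTL] by blast
        have dP: "fst P \<noteq> x1" "snd P \<noteq> y1" using distS[OF s1(1) s1(3) s1(2) s1(5)] by auto
        have dQ: "fst Q \<noteq> x2" "snd Q \<noteq> y1" using distS[OF s2(1) s2(3) s2(2) s2(5)] by auto
        have dR: "fst R \<noteq> x1" "snd R \<noteq> y2" using distS[OF s3(1) s3(3) s3(2) s3(5)] by auto
        have bP: "x1 \<le> fst P" "fst P \<le> x2" "y1 \<le> snd P" "snd P \<le> y2"
          "fst P = x1 \<or> fst P = x2 \<or> snd P = y1 \<or> snd P = y2" using s1(4) bX bY unfolding B_def by auto
        have bQ: "x1 \<le> fst Q" "fst Q \<le> x2" "y1 \<le> snd Q" "snd Q \<le> y2"
          "fst Q = x1 \<or> fst Q = x2 \<or> snd Q = y1 \<or> snd Q = y2" using s2(4) bX bY unfolding B_def by auto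
        have bR: "x1 \<le> fst R" "fst R \<le> x2" "y1 \<le> snd R" "snd R \<le> y2"
          "fst R = x1 \<or> fst R = x2 \<or> snd R = y1 \<or> snd R = y2" using s3(4) bX bY unfolding B_def by auto
        show False
        proof (cases "fst P = x2")
          case True
          have py: "y1 < snd P" using dP bP by linarith
          have qx: "fst Q < x2" using dQ bQ by linarith
          have qy: "y1 < snd Q" using dQ bQ by linarith
          have qd: "fst Q = x1 \<or> snd Q = y2" using dQ bQ(5) by blast
          obtain z where z: "z \<in> closed_segment (x1, y1) P" "z \<in> closed_segment (x2, y1) Q"
            using case1[OF refl True py bP(4) x12 refl bQ(1) qx qy bQ(4) qd] by blast
          have "s1 \<noteq> s2"
          proof
            assume "s1 = s2"
            then show False using distS[OF s1(1) s1(2), of "(x2, y1)"] s2(2) x12 by auto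
          qed
          then have "(z = (x1, y1) \<or> z = P) \<and> (z = (x2, y1) \<or> z = Q)"
            using cross_contra[OF ncS s1(1) s2(1) _ s1(2) s1(3) s2(2) s2(3) z] by blast
          then show False using True dP dQ bP bQ x12 by (auto simp: prod_eq_iff)
        next
          case False
          then have sP: "snd P = y2" using bP dP by auto
          have px: "x1 < fst P" using dP bP by linarith
          have rx: "x1 < fst R" using dR bR by linarith
          have ry: "snd R < y2" using dR bR by linarith
          have rd: "snd R = y1 \<or> fst R = x2" using dR bR(5) by blast
          obtain z where z: "z \<in> closed_segment (x1, y1) P" "z \<in> closed_segment (x1, y2) R"
            using case2[OF refl sP px bP(2) y12 refl bR(3) ry rx bR(2) rd] by blast
          have "s1 \<noteq> s3"
          proof
            assume "s1 = s3"
            then show False using distS[OF s1(1) s1(2), of "(x1, y2)"] s3(2) y12 by auto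
          qed
          then have "(z = (x1, y1) \<or> z = P) \<and> (z = (x1, y2) \<or> z = R)"
            using cross_contra[OF ncS s1(1) s3(1) _ s1(2) s1(3) s3(2) s3(3) z] by blast
          then show False using False sP dP dR bP bR y12 by (auto simp: prod_eq_iff)
        qed
      qed
      then obtain s0 where s0: "s0 \<in> S" "card (s0 \<inter> B) \<le> 1" by blast
      have "(\<Sum>s\<in>S. card (s \<inter> B)) = card (s0 \<inter> B) + (\<Sum>s\<in>S - {s0}. card (s \<inter> B))"
        using sum.remove[OF finS s0(1)] .
      moreover have "(\<Sum>s\<in>S - {s0}. card (s \<inter> B)) \<le> 2 * card (S - {s0})"
        using sum_mono[of "S - {s0}" "\<lambda>s. card (s \<inter> B)" "\<lambda>_. 2"] le2 by simp
      moreover have "card (S - {s0}) = card S - 1" using s0(1) finS by simp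
      moreover have "card S \<ge> 1" using card_gt_0_iff[of S] s0(1) finS by auto
      ultimately show ?thesis using cB cardB s0(2) by linarith
    qed
    show ?thesis using cB cardB sum2 nc by linarith
  qed
  show ?thesis
  proof (cases "k = 1 \<or> l = 1")
    case True
    then have "card S \<ge> k + l - 1" using onek onel assms(5,6) by auto
    then show ?thesis by auto
  next
    case False
    then have "k \<ge> 2" "l \<ge> 2" using assms(5,6) by auto
    note k2 = this
    have m: "2*k + 2*l - 4 \<le> 2 * card S" using main[OF k2] by blast
    have m2: "2*k + 2*l - 4 \<le> 2 * card S - 1" if "noncrossing S" using main[OF k2] that by blast
    have "k + l - 2 \<le> card S" using m k2 by linarith
    moreover have "k + l - 1 \<le> card S" if "noncrossing S" using m2[OF that] k2 by linarith
    ultimately show ?thesis using False by blast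
  qed
qed

end
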